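(* Let $d\ge 1$, let $f_0\in L^1(\mathbb{R}^d\times\mathbb{R}^d)\cap L^\infty(\mathbb{R}^d\times\mathbb{R}^d)$ with $f_0\ge 0$, let $\tau>0$ and $h\ge 0$. Let $F(n\tau,x,v)$ denote either (i) the exact solution $F(n\tau,x,v)=f_0(\Phi_{n\tau}^0(x,v))$ of the whole-space Vlasov–Poisson equation, or (ii) the discrete approximation $F(n\tau,x,v)=f_{\tau,h}(n\tau,x,v)=f_0(\Psi_{n\tau,h}^0(x,v))$, where $\Psi^0_{n\tau,h}$ is the Störmer–Verlet numerical flow computed with an approximate electric field $E_{\tau,h}\approx E$ (no assumption is made on the size of the error $E_{\tau,h}-E$). Then for all $n\in\mathbb{N}_0$: (a) (maximum principle) $0\le F(n\tau,x,v)\le \|f_0\|_{L^\infty(\mathbb{R}^d\times\mathbb{R}^d)}$; (b) for all $1\le p\le\infty$, $\|F(n\tau,\cdot,\cdot)\|_{L^p(\mathbb{R}^d\times\mathbb{R}^d)}=\|f_0\|_{L^p(\mathbb{R}^d\times\mathbb{R}^d)}$; (c) (kinetic entropy) $\iint_{\mathbb{R}^d\times\mathbb{R}^d}F(n\tau,x,v)\ln F(n\tau,x,v)\,dv\,dx=\iint_{\mathbb{R}^d\times\mathbb{R}^d}f_0\ln f_0\,dv\,dx$; (d) more generally, for every function $g:\mathbb{R}\to\mathbb{R}$ for which the following integrals are defined, $\iint_{\mathbb{R}^d\times\mathbb{R}^d}g(F(n\tau,x,v))\,dv\,dx=\iint_{\mathbb{R}^d\times\mathbb{R}^d}g(f_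0(x,v))\,dv\,dx$.
   Context: Whole-space Vlasov–Poisson system (no ion background): $\partial_t f+v\cdot\nabla_x f-E\cdot\nabla_v f=0$, $E=-\nabla_x\varphi$, $-\Delta_x\varphi=\rho$, $\rho(t,x)=-\int_{\mathbb{R}^d}f(t,x,v)\,dv$, $f(0,\cdot,\cdot)=f_0$; the field $E$ is assumed sufficiently smooth. Exact flow: $\Phi_s^t(x,v):=(\hat x(t),\hat v(t))$, where $(\hat x,\hat v)$ is the unique solution of $\frac{d}{dt}\hat x=\hat v$, $\frac{d}{dt}\hat v=-E(t,\hat x)$, $\hat x(s)=x$, $\hat v(s)=v$. Numerical flow: given a time step $\tau>0$ and approximate fields $E_{\tau,h}(k\tau,\cdot):\mathbb{R}^d\to\mathbb{R}^d$ (continuously differentiable), $k=0,\dots,n$, define for $k=1,\dots,n$ the single step $\Psi_{k\tau,h}^{(k-1)\tau}(x,v):=(x_{k-1},v_{k-1})$ with $v_{k-\frac12}:=v+\frac{\tau}{2}E_{\tau,h}(k\tau,x)$, $x_{k-1}:=x-\tau v_{k-\frac12}$, $v_{k-1}:=v_{k-\frac12}+\frac{\tau}{2}E_{\tau,h}((k-1)\tau,x_{k-1})$, and set $\Psi_{n\tau,h}^0:=\Psi_{\tau,h}^0\circ\Psi_{2\tau,h}^{\tau}\circ\cdots\circ\Psi_{n\tau,h}^{(n-1)\tau}$ (identity for $n=0$). *)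

theory Defs
  imports "HOL-Analysis.Analysis" "HOL-Probability.Essential_Supremum"
begin

text \<open>Phase space: pairs (x,v) in 'a \<times> 'a, where 'a is a Euclidean space (R^d, d = DIM('a)).\<close>

definition Lp_norm :: "'b measure \<Rightarrow> ereal \<Rightarrow> ('b \<Rightarrow> real) \<Rightarrow> ereal" where
  "Lp_norm M p f =
     (if p = \<infinity> then esssup M (\<lambda>z. ereal \<bar>f z\<bar>)
      else (let I = (\<integral>\<^sup>+ z. ennreal (\<bar>f z\<bar> powr real_of_ereal p) \<partial>M)
            in if I = \<infinity> then \<infinity> else ereal (enn2real I powr (1 / real_of_ereal p))))"

definition C1_map :: "('a::real_normed_vector \<Rightarrow> 'b::real_normed_vector) \<Rightarrow> bool" where
  "C1_map g \<longleftrightarrow> (\<exists>g'. (\<forall>x. (g has_derivative blinfun_apply (g' x)) (at x)) \<and> continuous_on UNIV g')"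

definition is_characteristic ::
  "(real \<Rightarrow> 'a::euclidean_space \<Rightarrow> 'a) \<Rightarrow> real \<Rightarrow> 'a \<times> 'a \<Rightarrow> (real \<Rightarrow> 'a \<times> 'a) \<Rightarrow> bool" where
  "is_characteristic E s z y \<longleftrightarrow> y s = z \<and>
     (\<forall>t. (y has_vector_derivative (snd (y t), - E t (fst (y t)))) (at t))"

definition smooth_field :: "(real \<Rightarrow> 'a::euclidean_space \<Rightarrow> 'a) \<Rightarrow> bool" where
  "smooth_field E \<longleftrightarrow>
     continuous_on UNIV (\<lambda>p. E (fst p) (snd p)) \<and>
     (\<exists>E'. (\<forall>t x. (E t has_derivative blinfun_apply (E' t x)) (at x)) \<and>
           continuous_on UNIV (\<lambda>p. E' (fst p) (snd p))) \<and>
     (\<forall>s z. \<exists>!y. is_characteristic E s z y)"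

definition exact_flow :: "(real \<Rightarrow> 'a::euclidean_space \<Rightarrow> 'a) \<Rightarrow> real \<Rightarrow> real \<Rightarrow> 'a \<times> 'a \<Rightarrow> 'a \<times> 'a" where
  "exact_flow E s t z = (THE y. is_characteristic E s z y) t"

text \<open>Single backward Stoermer-Verlet step \<Psi>_{k\<tau>,h}^{(k-1)\<tau>}; Eh k stands for E_{\<tau>,h}(k\<tau>,\<cdot>).\<close>
definition sv_step :: "real \<Rightarrow> (nat \<Rightarrow> 'a::euclidean_space \<Rightarrow> 'a) \<Rightarrow> nat \<Rightarrow> 'a \<times> 'a \<Rightarrow> 'a \<times> 'a" where
  "sv_step \<tau> Eh k z =
     (let x = fst z; v = snd z;
          vh = v + (\<tau> / 2) *\<^sub>R Eh k x;
          x' = x - \<tau> *\<^sub>R vh;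
          v' = vh + (\<tau> / 2) *\<^sub>R Eh (k - 1) x'
      in (x', v'))"

fun sv_flow :: "real \<Rightarrow> (nat \<Rightarrow> 'a::euclidean_space \<Rightarrow> 'a) \<Rightarrow> nat \<Rightarrow> 'a \<times> 'a \<Rightarrow> 'a \<times> 'a" where
  "sv_flow \<tau> Eh 0 = id"
| "sv_flow \<tau> Eh (Suc n) = sv_flow \<tau> Eh n \<circ> sv_step \<tau> Eh (Suc n)"

end

theory Submission imports Defs begin


definition mpres :: "('b::euclidean_space \<Rightarrow> 'b) \<Rightarrow> bool" where
  "mpres T \<longleftrightarrow> T \<in> measurable lborel lborel \<and> distr lborel lborel T = lborel"

lemma mpres_comp:
  assumes "mpres S" "mpres T" shows "mpres (S \<circ> T)"
proof -
  have mS: "S \<in> measurable lborel lborel" and mT: "T \<in> measurable lborel lborel"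
    using assms by (auto simp: mpres_def)
  have "distr lborel lborel (S \<circ> T) = distr (distr lborel lborel T) lborel S"
    using distr_distr[OF mS mT] by (simp add: comp_def)
  also have "\<dots> = lborel" using assms by (simp add: mpres_def)
  finally show ?thesis using mS mT by (simp add: mpres_def measurable_comp)
qed

lemma mpres_id: "mpres id"
  by (simp add: mpres_def distr_id[unfolded id_def] id_def)

lemma mpres_swap: "mpres (\<lambda>(x::'a::euclidean_space, y::'a). (y, x))"
proof -
  have "distr lborel lborel (\<lambda>(x::'a, y::'a). (y, x)) = (lborel::('a \<times> 'a) measure)"
    using lborel_pair.distr_pair_swap[symmetric] lborel_prod by metis
  moreover have "(\<lambda>(x::'a, y::'a). (y, x)) \<in> measurable lborel lborel"
    using measurable_pair_swap'[of "lborel::'a measure" "lborel::'a measure"] lborel_prod by metis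
  ultimately show ?thesis by (simp add: mpres_def)
qed

lemma mpres_shear_v:
  fixes g :: "'a::euclidean_space \<Rightarrow> 'a"
  assumes g: "g \<in> borel_measurable borel"
  shows "mpres (\<lambda>(x, v). (x, v + g x))"
proof -
  let ?T = "\<lambda>(x::'a, v::'a). (x, v + g x)"
  have mT: "?T \<in> measurable (lborel \<Otimes>\<^sub>M lborel) (lborel \<Otimes>\<^sub>M lborel)"
  proof -
    have g': "g \<in> lborel \<rightarrow>\<^sub>M lborel" using g by simp
    have a: "(\<lambda>p::'a \<times> 'a. g (fst p)) \<in> borel_measurable (lborel \<Otimes>\<^sub>M lborel)"
      using measurable_compose[OF measurable_fst g'] by simp
    have b: "(\<lambda>p::'a \<times> 'a. snd p + g (fst p)) \<in> borel_measurable (lborel \<Otimes>\<^sub>M lborel)"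
    proof -
      have sn: "(snd::'a \<times> 'a \<Rightarrow> 'a) \<in> borel_measurable (lborel \<Otimes>\<^sub>M lborel)"
        using measurable_snd[of "lborel::'a measure" "lborel::'a measure"] by simp
      show ?thesis using borel_measurable_add[OF sn a] .
    qed
    have "(\<lambda>p::'a \<times> 'a. (fst p, snd p + g (fst p))) \<in> (lborel \<Otimes>\<^sub>M lborel) \<rightarrow>\<^sub>M (lborel \<Otimes>\<^sub>M lborel)"
      using b by (intro measurable_Pair measurable_fst) simp
    then show ?thesis by (simp add: case_prod_beta')
  qed
  have "distr (lborel \<Otimes>\<^sub>M lborel) (lborel \<Otimes>\<^sub>M lborel) ?T = lborel \<Otimes>\<^sub>M (lborel::'a measure)"
  proof (rule measure_eqI)
    fix A assume A: "A \<in> sets (distr (lborel \<Otimes>\<^sub>M lborel) (lborel \<Otimes>\<^sub>M lborel) ?T)"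
    then have A': "A \<in> sets (lborel \<Otimes>\<^sub>M (lborel::'a measure))" by simp
    have "emeasure (distr (lborel \<Otimes>\<^sub>M lborel) (lborel \<Otimes>\<^sub>M lborel) ?T) A
        = emeasure (lborel \<Otimes>\<^sub>M lborel) (?T -` A \<inter> space (lborel \<Otimes>\<^sub>M lborel))"
      using A' mT by (simp add: emeasure_distr)
    also have "\<dots> = emeasure (lborel \<Otimes>\<^sub>M lborel) (?T -` A)"
      by (simp add: space_pair_measure)
    also have "\<dots> = (\<integral>\<^sup>+x. emeasure lborel (Pair x -` (?T -` A)) \<partial>lborel)"
      using measurable_sets[OF mT A'] by (simp add: lborel.emeasure_pair_measure_alt space_pair_measure)
    also have "\<dots> = (\<integral>\<^sup>+x. emeasure lborel (Pair x -` A) \<partial>lborel)"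
    proof (rule nn_integral_cong)
      fix x :: 'a
      have PA: "Pair x -` A \<in> sets borel" using sets_Pair1[OF A'] by simp
      have "Pair x -` (?T -` A) = ((+) (g x)) -` (Pair x -` A) \<inter> space lborel"
        by (auto simp: add.commute)
      then have "emeasure lborel (Pair x -` (?T -` A)) = emeasure (distr lborel borel ((+) (g x))) (Pair x -` A)"
        using PA by (simp add: emeasure_distr)
      also have "\<dots> = emeasure lborel (Pair x -` A)" by (simp add: lborel_distr_plus)
      finally show "emeasure lborel (Pair x -` (?T -` A)) = emeasure lborel (Pair x -` A)" .
    qed
    also have "\<dots> = emeasure (lborel \<Otimes>\<^sub>M lborel) A"
      using A' by (simp add: lborel.emeasure_pair_measure_alt)
    finally show "emeasure (distr (lborel \<Otimes>\<^sub>M lborel) (lborel \<Otimes>\<^sub>M lborel) ?T) A = emeasure (lborel \<Otimes>\<^sub>M lborel) A" .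
  qed simp
  then show ?thesis using mT by (simp add: mpres_def lborel_prod)
qed

lemma mpres_shear_x:
  fixes g :: "'a::euclidean_space \<Rightarrow> 'a"
  assumes g: "g \<in> borel_measurable borel"
  shows "mpres (\<lambda>(x, v). (x + g v, v))"
proof -
  have e: "(\<lambda>(x, v). (x + g v, v)) = (\<lambda>(x::'a, y::'a). (y, x)) \<circ> (\<lambda>(x, v). (x, v + g x)) \<circ> (\<lambda>(x::'a, y::'a). (y, x))"
    by (auto simp: fun_eq_iff)
  have "mpres ((\<lambda>(x::'a, y::'a). (y, x)) \<circ> (\<lambda>(x, v). (x, v + g x)) \<circ> (\<lambda>(x::'a, y::'a). (y, x)))"
    by (rule mpres_comp[OF mpres_comp[OF mpres_swap mpres_shear_v[OF g]] mpres_swap])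
  then show ?thesis by (simp only: e)
qed


lemma mpres_meas: "mpres T \<Longrightarrow> T \<in> measurable lborel lborel"
  by (simp add: mpres_def)

lemma mpres_nn:
  assumes "mpres T" "h \<in> borel_measurable lborel"
  shows "(\<integral>\<^sup>+z. h (T z) \<partial>lborel) = (\<integral>\<^sup>+z. h z \<partial>lborel)"
proof -
  have "(\<integral>\<^sup>+z. h z \<partial>lborel) = (\<integral>\<^sup>+z. h z \<partial>(distr lborel lborel T))"
    using assms by (simp add: mpres_def)
  also have "\<dots> = (\<integral>\<^sup>+z. h (T z) \<partial>lborel)"
    using assms by (intro nn_integral_distr) (auto simp: mpres_def)
  finally show ?thesis by simp
qed

lemma mpres_int:
  fixes h :: "_ \<Rightarrow> real"
  assumes "mpres T" "h \<in> borel_measurable lborel"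
  shows "(\<integral>z. h (T z) \<partial>lborel) = (\<integral>z. h z \<partial>lborel)"
proof -
  have "(\<integral>z. h z \<partial>lborel) = (\<integral>z. h z \<partial>(distr lborel lborel T))"
    using assms by (simp add: mpres_def)
  also have "\<dots> = (\<integral>z. h (T z) \<partial>lborel)"
    using assms by (intro integral_distr) (auto simp: mpres_def)
  finally show ?thesis by simp
qed

lemma mpres_emeasure:
  assumes "mpres T" "A \<in> sets lborel"
  shows "emeasure lborel (T -` A) = emeasure lborel A"
proof -
  have "emeasure lborel A = emeasure (distr lborel lborel T) A"
    using assms by (simp add: mpres_def)
  also have "\<dots> = emeasure lborel (T -` A \<inter> space lborel)"
    using assms by (intro emeasure_distr) (auto simp: mpres_def)
  finally show ?thesis by simp
qed

lemma mpres_esssup: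
  fixes h :: "_ \<Rightarrow> ereal"
  assumes "mpres T" "h \<in> borel_measurable lborel"
  shows "esssup lborel (\<lambda>z. h (T z)) = esssup lborel h"
proof -
  have hT: "(\<lambda>z. h (T z)) \<in> borel_measurable lborel"
    using assms by (auto simp: mpres_def intro: measurable_compose)
  have "{x \<in> space lborel. z < h (T x)} = T -` {x \<in> space lborel. z < h x}" for z
    by auto
  moreover have "{x \<in> space lborel. z < h x} \<in> sets lborel" for z
    using assms(2) by measurable
  ultimately have "emeasure lborel {x \<in> space lborel. z < h (T x)} = emeasure lborel {x \<in> space lborel. z < h x}" for z
    using mpres_emeasure[OF assms(1)] by metis
  then show ?thesis using hT assms(2) by (simp add: esssup_eq)
qed

lemma mpres_props:
  fixes f0 :: "'a::euclidean_space \<Rightarrow> real"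
  assumes mp: "mpres T" and f0m: "f0 \<in> borel_measurable lborel" and f0_nonneg: "\<forall>z. 0 \<le> f0 z"
  shows  "(\<forall>z. 0 \<le> f0 (T z)) \<and>
           (AE z in lborel. ereal (f0 (T z)) \<le> Lp_norm lborel \<infinity> f0) \<and>
           (\<forall>p::ereal. 1 \<le> p \<longrightarrow> Lp_norm lborel p (\<lambda>z. f0 (T z)) = Lp_norm lborel p f0) \<and>
           (\<integral>z. f0 (T z) * ln (f0 (T z)) \<partial>lborel) = (\<integral>z. f0 z * ln (f0 z) \<partial>lborel) \<and>
           (\<forall>g :: real \<Rightarrow> real.
              integrable lborel (\<lambda>z. g (f0 (T z))) \<and> integrable lborel (\<lambda>z. g (f0 z)) \<longrightarrow>
              (\<integral>z. g (f0 (T z)) \<partial>lborel) = (\<integral>z. g (f0 z) \<partial>lborel))"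
proof (intro conjI allI impI)
  fix z show "0 \<le> f0 (T z)" using f0_nonneg by simp
next
  have mT: "T \<in> measurable lborel lborel" using mp by (simp add: mpres_def)
  have ab: "(\<lambda>z. ereal \<bar>f0 z\<bar>) \<in> borel_measurable lborel" using f0m by measurable
  have eqd: "distr lborel lborel T = lborel" using mp by (simp add: mpres_def)
  have ad: "AE w in distr lborel lborel T. ereal \<bar>f0 w\<bar> \<le> esssup lborel (\<lambda>z. ereal \<bar>f0 z\<bar>)"
    unfolding eqd by (rule esssup_AE)
  have ms: "{w \<in> space lborel. ereal \<bar>f0 w\<bar> \<le> esssup lborel (\<lambda>z. ereal \<bar>f0 z\<bar>)} \<in> sets lborel"
    using ab by measurable
  have "AE z in lborel. ereal \<bar>f0 (T z)\<bar> \<le> esssup lborel (\<lambda>z. ereal \<bar>f0 z\<bar>)"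
    using AE_distr_iff[OF mT ms] ad by simp
  then show "AE z in lborel. ereal (f0 (T z)) \<le> Lp_norm lborel \<infinity> f0"
    using f0_nonneg by (simp add: Lp_norm_def)
next
  fix p :: ereal assume "1 \<le> p"
  have ab: "(\<lambda>z. ereal \<bar>f0 z\<bar>) \<in> borel_measurable lborel" using f0m by measurable
  have e: "esssup lborel (\<lambda>z. ereal \<bar>f0 (T z)\<bar>) = esssup lborel (\<lambda>z. ereal \<bar>f0 z\<bar>)"
    using mpres_esssup[OF mp ab] by simp
  have m2: "(\<lambda>z. ennreal (\<bar>f0 z\<bar> powr real_of_ereal p)) \<in> borel_measurable lborel" using f0m by measurable
  have n: "(\<integral>\<^sup>+ z. ennreal (\<bar>f0 (T z)\<bar> powr real_of_ereal p) \<partial>lborel) = (\<integral>\<^sup>+ z. ennreal (\<bar>f0 z\<bar> powr real_of_ereal p) \<partial>lborel)"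
    using mpres_nn[OF mp m2] by simp
  show "Lp_norm lborel p (\<lambda>z. f0 (T z)) = Lp_norm lborel p f0"
    unfolding Lp_norm_def using e n by simp
next
  have m: "(\<lambda>z. f0 z * ln (f0 z)) \<in> borel_measurable lborel" using f0m by measurable
  show "(\<integral>z. f0 (T z) * ln (f0 (T z)) \<partial>lborel) = (\<integral>z. f0 z * ln (f0 z) \<partial>lborel)"
    using mpres_int[OF mp m] by simp
next
  fix g :: "real \<Rightarrow> real"
  assume "integrable lborel (\<lambda>z. g (f0 (T z))) \<and> integrable lborel (\<lambda>z. g (f0 z))"
  then have m: "(\<lambda>z. g (f0 z)) \<in> borel_measurable lborel" by auto
  show "(\<integral>z. g (f0 (T z)) \<partial>lborel) = (\<integral>z. g (f0 z) \<partial>lborel)"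
    using mpres_int[OF mp m] by simp
qed

lemma C1_map_meas:
  assumes "C1_map (g::'a::euclidean_space \<Rightarrow> 'a)" shows "g \<in> borel_measurable borel"
proof -
  from assms obtain g' where "\<forall>x. (g has_derivative blinfun_apply (g' x)) (at x)"
    unfolding C1_map_def by blast
  then have "continuous_on UNIV g"
    by (meson has_derivative_continuous continuous_at_imp_continuous_on)
  then show ?thesis by (rule borel_measurable_continuous_onI)
qed

lemma sv_step_mpres:
  fixes Eh :: "nat \<Rightarrow> 'a::euclidean_space \<Rightarrow> 'a"
  assumes "\<forall>k. C1_map (Eh k)"
  shows "mpres (sv_step \<tau> Eh k)"
proof -
  have mE: "\<And>j. Eh j \<in> borel_measurable borel" using C1_map_meas assms by blast
  have m1a: "(\<lambda>x. (\<tau> / 2) *\<^sub>R Eh (k - 1) x) \<in> borel_measurable borel"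
    by (intro borel_measurable_scaleR borel_measurable_const mE)
  have m1b: "(\<lambda>x. (\<tau> / 2) *\<^sub>R Eh k x) \<in> borel_measurable borel"
    by (intro borel_measurable_scaleR borel_measurable_const mE)
  have m2: "(\<lambda>v::'a. (- \<tau>) *\<^sub>R v) \<in> borel_measurable borel"
    by (intro borel_measurable_continuous_onI continuous_intros)
  have e: "sv_step \<tau> Eh k = (\<lambda>(x, v). (x, v + (\<tau> / 2) *\<^sub>R Eh (k - 1) x)) \<circ> (\<lambda>(x, v). (x + (- \<tau>) *\<^sub>R v, v))
          \<circ> (\<lambda>(x, v). (x, v + (\<tau> / 2) *\<^sub>R Eh k x))"
    by (auto simp: fun_eq_iff sv_step_def Let_def)
  have "mpres ((\<lambda>(x, v). (x, v + (\<tau> / 2) *\<^sub>R Eh (k - 1) x)) \<circ> (\<lambda>(x, v). (x + (- \<tau>) *\<^sub>R v, v))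
          \<circ> (\<lambda>(x, v). (x, v + (\<tau> / 2) *\<^sub>R Eh k x)))"
    by (rule mpres_comp[OF mpres_comp[OF mpres_shear_v[OF m1a] mpres_shear_x[OF m2]] mpres_shear_v[OF m1b]])
  then show ?thesis by (simp only: e)
qed

lemma sv_flow_mpres:
  fixes Eh :: "nat \<Rightarrow> 'a::euclidean_space \<Rightarrow> 'a"
  assumes "\<forall>k. C1_map (Eh k)"
  shows "mpres (sv_flow \<tau> Eh n)"
proof (induction n)
  case 0
  then show ?case using mpres_id by (simp add: id_def)
next
  case (Suc n)
  have e: "sv_flow \<tau> Eh (Suc n) = sv_flow \<tau> Eh n \<circ> sv_step \<tau> Eh (Suc n)" by simp
  show ?case by (simp only: e, rule mpres_comp[OF Suc.IH sv_step_mpres[OF assms]])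
qed



definition sol :: "(real \<Rightarrow> 'a::euclidean_space \<Rightarrow> 'a) \<Rightarrow> real \<Rightarrow> 'a \<times> 'a \<Rightarrow> (real \<Rightarrow> 'a \<times> 'a)" where
  "sol E s z = (THE y. is_characteristic E s z y)"

lemma sol_char:
  assumes "smooth_field E" shows "is_characteristic E s z (sol E s z)"
proof -
  have "\<exists>!y. is_characteristic E s z y" using assms unfolding smooth_field_def by blast
  then show ?thesis unfolding sol_def by (rule theI')
qed

lemma sol_unique:
  assumes "smooth_field E" "is_characteristic E s z y" shows "sol E s z = y"
proof -
  have "\<exists>!y. is_characteristic E s z y" using assms unfolding smooth_field_def by blast
  then show ?thesis using assms(2) sol_char[OF assms(1)] by blast
qed

lemma exact_flow_sol: "exact_flow E s t z = sol E s z t"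
  by (simp add: exact_flow_def sol_def)

lemma exact_flow_inv:
  assumes "smooth_field E" shows "exact_flow E t s (exact_flow E s t z) = z"
proof -
  let ?y = "sol E s z"
  have c: "is_characteristic E s z ?y" by (rule sol_char[OF assms])
  then have "is_characteristic E t (?y t) ?y" by (simp add: is_characteristic_def)
  then have "sol E t (?y t) = ?y" by (rule sol_unique[OF assms])
  then show ?thesis using c by (simp add: exact_flow_sol is_characteristic_def)
qed

definition estep :: "(real \<Rightarrow> 'a::euclidean_space \<Rightarrow> 'a) \<Rightarrow> real \<Rightarrow> real \<Rightarrow> 'a \<times> 'a \<Rightarrow> 'a \<times> 'a" where
  "estep E t d z = (fst z + d *\<^sub>R (snd z - d *\<^sub>R E t (fst z)), snd z - d *\<^sub>R E t (fst z))"

fun eul :: "(real \<Rightarrow> 'a::euclidean_space \<Rightarrow> 'a) \<Rightarrow> real \<Rightarrow> real \<Rightarrow> nat \<Rightarrow> 'a \<times> 'a \<Rightarrow> 'a \<times> 'a" where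
  "eul E s d 0 z = z"
| "eul E s d (Suc k) z = estep E (s + real k * d) d (eul E s d k z)"

lemma smooth_cont:
  assumes "smooth_field E" shows "continuous_on UNIV (E t)"
proof -
  from assms obtain E' where "\<forall>t x. (E t has_derivative blinfun_apply (E' t x)) (at x)"
    unfolding smooth_field_def by blast
  then show ?thesis
    by (meson has_derivative_continuous continuous_at_imp_continuous_on)
qed

lemma estep_mpres:
  assumes "smooth_field E" shows "mpres (estep E t d)"
proof -
  have mE: "E t \<in> borel_measurable borel"
    using smooth_cont[OF assms] by (rule borel_measurable_continuous_onI)
  have m1: "(\<lambda>x. (- d) *\<^sub>R E t x) \<in> borel_measurable borel"
    by (intro borel_measurable_scaleR borel_measurable_const mE)
  have m2: "(\<lambda>v::'a. d *\<^sub>R v) \<in> borel_measurable borel"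
    by (intro borel_measurable_continuous_onI continuous_intros)
  have e: "estep E t d = (\<lambda>(x, v). (x + d *\<^sub>R v, v)) \<circ> (\<lambda>(x, v). (x, v + (- d) *\<^sub>R E t x))"
    by (auto simp: fun_eq_iff estep_def)
  have "mpres ((\<lambda>(x, v). (x + d *\<^sub>R v, v)) \<circ> (\<lambda>(x, v). (x, v + (- d) *\<^sub>R E t x)))"
    by (rule mpres_comp[OF mpres_shear_x[OF m2] mpres_shear_v[OF m1]])
  then show ?thesis by (simp only: e)
qed

lemma eul_mpres:
  assumes "smooth_field E" shows "mpres (eul E s d k)"
proof (induction k)
  case 0
  then show ?case using mpres_id by (simp add: id_def)
next
  case (Suc k)
  have e: "eul E s d (Suc k) = estep E (s + real k * d) d \<circ> eul E s d k" by (simp add: fun_eq_iff)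
  show ?case by (simp only: e, rule mpres_comp[OF estep_mpres[OF assms] Suc.IH])
qed

lemma arith_step:
  fixes ex ev ex' ev' d L e :: real
  assumes "0 \<le> ex" "0 \<le> ev" "0 \<le> d" "d \<le> 1" "0 \<le> L" "0 \<le> e" "0 \<le> ev'"
    and "ev' \<le> ev + d * L * ex + d * e" and "ex' \<le> ex + d * ev' + d * e"
  shows "ex' + ev' \<le> (1 + (3 + 2 * L) * d) * (ex + ev) + (3 + 2 * L) * d * e"
proof -
  have "d * ev' \<le> d * (ev + d * L * ex + d * e)" using assms by (intro mult_left_mono) auto
  also have "\<dots> \<le> d * (ev + L * ex + e)"
  proof -
    have "d * L * ex \<le> L * ex" using assms by (metis mult_left_le_one_le mult_nonneg_nonneg mult.assoc)
    moreover have "d * e \<le> e" using assms by (simp add: mult_left_le_one_le)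
    ultimately show ?thesis using assms by (intro mult_left_mono) auto
  qed
  finally have 1: "d * ev' \<le> d * (ev + L * ex + e)" .
  have "ex' + ev' \<le> ex + ev + d * L * ex + d * e + d * (ev + L * ex + e) + d * e"
    using 1 assms by linarith
  also have "\<dots> = (ex + ev) + d * (2 * L * ex + ev + 3 * e)" by (simp add: algebra_simps)
  also have "\<dots> \<le> (ex + ev) + d * ((3 + 2 * L) * (ex + ev) + (3 + 2 * L) * e)"
    using assms by (intro add_left_mono mult_left_mono) (auto simp: algebra_simps intro!: add_mono mult_left_mono mult_nonneg_nonneg)
  also have "\<dots> = (1 + (3 + 2 * L) * d) * (ex + ev) + (3 + 2 * L) * d * e" by (simp add: algebra_simps)
  finally show ?thesis .
qed



lemma in_I:
  fixes s t :: real
  assumes "k \<le> Suc N"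
  shows "s + real k * ((t - s) / real (Suc N)) \<in> {min s t..max s t}"
proof -
  define l where "l = real k / real (Suc N)"
  have l0: "0 \<le> l" and l1: "l \<le> 1" using assms by (auto simp: l_def field_simps)
  have e: "s + real k * ((t - s) / real (Suc N)) = s + l * (t - s)" by (simp add: l_def field_simps)
  show ?thesis
  proof (cases "s \<le> t")
    case True
    have "0 \<le> l * (t - s)" using l0 True by simp
    moreover have "l * (t - s) \<le> 1 * (t - s)" using l1 True by (intro mult_right_mono) auto
    ultimately show ?thesis unfolding e using True by auto
  next
    case False
    have h1: "l * (t - s) \<le> 0" using l0 False by (simp add: mult_nonneg_nonpos)
    have h2: "1 * (t - s) \<le> l * (t - s)" using l1 False by (intro mult_right_mono_neg) auto
    have h3: "min s t = t" "max s t = s" using False by auto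
    have h4: "t - s \<le> l * (t - s)" using h2 by simp
    show ?thesis unfolding e atLeastAtMost_iff h3 using h1 h4 by (intro conjI) linarith+
  qed
qed

lemma eul_err:
  fixes E :: "real \<Rightarrow> 'a::euclidean_space \<Rightarrow> 'a" and X V :: "real \<Rightarrow> 'a"
  assumes dX: "\<And>r. (X has_vector_derivative V r) (at r)"
    and dV: "\<And>r. (V has_vector_derivative - E r (X r)) (at r)"
    and bnd: "\<And>r. r \<in> {min s t..max s t} \<Longrightarrow> norm (X r) \<le> R"
    and lip: "\<And>r a b. r \<in> {min s t..max s t} \<Longrightarrow> norm a \<le> R + 1 \<Longrightarrow> norm b \<le> R + 1 \<Longrightarrow>
                 norm (E r a - E r b) \<le> L * norm (a - b)"
    and L: "0 \<le> L" and ep: "0 \<le> \<epsilon>"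
    and dd: "d = (t - s) / real (Suc N)" and d1: "\<bar>d\<bar> \<le> 1"
    and ucV: "\<And>a b. a \<in> {min s t..max s t} \<Longrightarrow> b \<in> {min s t..max s t} \<Longrightarrow> \<bar>a - b\<bar> \<le> \<bar>d\<bar> \<Longrightarrow>
                 norm (V a - V b) \<le> \<epsilon>"
    and ucW: "\<And>a b. a \<in> {min s t..max s t} \<Longrightarrow> b \<in> {min s t..max s t} \<Longrightarrow> \<bar>a - b\<bar> \<le> \<bar>d\<bar> \<Longrightarrow>
                 norm (E a (X a) - E b (X b)) \<le> \<epsilon>"
    and small: "\<epsilon> * exp ((3 + 2 * L) * \<bar>t - s\<bar>) \<le> 1"
  shows "k \<le> Suc N \<Longrightarrow> norm (fst (eul E s d k (X s, V s)) - X (s + real k * d))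
            + norm (snd (eul E s d k (X s, V s)) - V (s + real k * d))
          \<le> \<epsilon> * ((1 + (3 + 2 * L) * \<bar>d\<bar>) ^ k - 1)"
proof (induction k)
  case 0
  show ?case by simp
next
  case (Suc k)
  define C where "C = 3 + 2 * L"
  define q where "q = 1 + C * \<bar>d\<bar>"
  define a where "a = s + real k * d"
  define b where "b = s + real (Suc k) * d"
  let ?I = "{min s t..max s t}"
  have bad: "b - a = d" by (simp add: a_def b_def algebra_simps)
  have aI: "a \<in> ?I" using in_I[of k N s t] Suc.prems dd by (simp add: a_def)
  have bI: "b \<in> ?I" using in_I[of "Suc k" N s t] Suc.prems dd by (simp add: b_def)
  have cI: "convex ?I" by (rule convex_real_interval)
  have segI: "closed_segment a b \<subseteq> ?I" by (rule closed_segment_subset[OF aI bI cI])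
  obtain x v where xv: "eul E s d k (X s, V s) = (x, v)" by (cases "eul E s d k (X s, V s)")
  define ex where "ex = norm (x - X a)"
  define ev where "ev = norm (v - V a)"
  have IH: "ex + ev \<le> \<epsilon> * (q ^ k - 1)"
    using Suc.IH Suc.prems xv by (simp add: ex_def ev_def a_def q_def C_def)
  have C0: "0 \<le> C" using L by (simp add: C_def)
  have q1: "1 \<le> q" using C0 by (simp add: q_def)
  have "q ^ k \<le> exp (C * \<bar>d\<bar>) ^ k"
    using power_mono[OF exp_ge_add_one_self[of "C * \<bar>d\<bar>"], of k] q1 by (simp add: q_def add.commute)
  also have "\<dots> = exp (real k * (C * \<bar>d\<bar>))" by (simp add: exp_of_nat_mult)
  also have "\<dots> \<le> exp (C * \<bar>t - s\<bar>)"
  proof -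
    have "real k * \<bar>d\<bar> \<le> real (Suc N) * \<bar>d\<bar>" using Suc.prems by (intro mult_right_mono) auto
    also have "\<dots> = \<bar>t - s\<bar>" by (simp add: dd abs_divide)
    finally have "real k * \<bar>d\<bar> \<le> \<bar>t - s\<bar>" .
    then have "C * (real k * \<bar>d\<bar>) \<le> C * \<bar>t - s\<bar>" using C0 by (rule mult_left_mono)
    then show ?thesis by (simp add: mult_ac)
  qed
  finally have qk: "q ^ k \<le> exp (C * \<bar>t - s\<bar>)" .
  have ex0: "0 \<le> ex" and ev0: "0 \<le> ev" by (simp_all add: ex_def ev_def)
  have "ex \<le> \<epsilon> * (q ^ k - 1)" using IH ev0 by linarith
  also have "\<dots> \<le> \<epsilon> * exp (C * \<bar>t - s\<bar>)" using qk ep by (intro mult_left_mono) auto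
  also have "\<dots> \<le> 1" using small by (simp add: C_def)
  finally have ex1: "ex \<le> 1" .
  have XaB: "norm (X a) \<le> R" using bnd[OF aI] .
  have xB: "norm x \<le> R + 1"
  proof -
    have "norm x \<le> norm (X a) + norm (x - X a)" by (metis norm_triangle_sub)
    then show ?thesis using XaB ex1 by (simp add: ex_def)
  qed
  define v' where "v' = v - d *\<^sub>R E a x"
  define x' where "x' = x + d *\<^sub>R v'"
  have step: "eul E s d (Suc k) (X s, V s) = (x', v')"
    using xv by (simp add: estep_def x'_def v'_def a_def)
  have LV: "norm (V b - V a - (b - a) *\<^sub>R (- E a (X a))) \<le> norm (b - a) * \<epsilon>"
  proof (rule vector_differentiable_bound_linearization[where S="closed_segment a b" and f'="\<lambda>r. - E r (X r)"])
    fix r assume "r \<in> closed_segment a b"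
    then show "(V has_vector_derivative - E r (X r)) (at r within closed_segment a b)"
      using dV has_vector_derivative_at_within by blast
  next
    fix r assume r: "r \<in> closed_segment a b"
    then have rI: "r \<in> ?I" using segI by blast
    have "norm (r - a) \<le> norm (b - a)" by (rule segment_bound1[OF r])
    then have "\<bar>r - a\<bar> \<le> \<bar>d\<bar>" using bad by simp
    then have "norm (E r (X r) - E a (X a)) \<le> \<epsilon>" using ucW[OF rI aI] by blast
    then show "norm (- E r (X r) - - E a (X a)) \<le> \<epsilon>" by (simp add: norm_minus_commute)
  qed auto
  have LX: "norm (X b - X a - (b - a) *\<^sub>R V b) \<le> norm (b - a) * \<epsilon>"
  proof (rule vector_differentiable_bound_linearization[where S="closed_segment a b" and f'=V])
    fix r assume "r \<in> closed_segment a b"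
    then show "(X has_vector_derivative V r) (at r within closed_segment a b)"
      using dX has_vector_derivative_at_within by blast
  next
    fix r assume r: "r \<in> closed_segment a b"
    then have rI: "r \<in> ?I" using segI by blast
    have "norm (r - b) \<le> norm (b - a)" by (rule segment_bound(2)[OF r])
    then have "\<bar>r - b\<bar> \<le> \<bar>d\<bar>" using bad by simp
    then show "norm (V r - V b) \<le> \<epsilon>" using ucV[OF rI bI] by blast
  qed auto
  have evb: "norm (v' - V b) \<le> ev + \<bar>d\<bar> * L * ex + \<bar>d\<bar> * \<epsilon>"
  proof -
    have eq: "v' - V b = (v - V a) - d *\<^sub>R (E a x - E a (X a)) - (V b - V a - (b - a) *\<^sub>R (- E a (X a)))"
      by (simp add: v'_def bad algebra_simps)
    have l: "norm (E a x - E a (X a)) \<le> L * ex"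
      using lip[OF aI xB] XaB by (simp add: ex_def)
    have "norm (v' - V b) \<le> norm (v - V a) + norm (d *\<^sub>R (E a x - E a (X a))) + norm (V b - V a - (b - a) *\<^sub>R (- E a (X a)))"
      unfolding eq by (meson norm_triangle_ineq4 add_mono order_trans order_refl)
    also have "\<dots> \<le> ev + \<bar>d\<bar> * (L * ex) + \<bar>d\<bar> * \<epsilon>"
      using LV l by (intro add_mono) (auto simp: ev_def bad intro: mult_left_mono)
    finally show ?thesis by (simp add: mult_ac)
  qed
  have exb: "norm (x' - X b) \<le> ex + \<bar>d\<bar> * norm (v' - V b) + \<bar>d\<bar> * \<epsilon>"
  proof -
    have eq: "x' - X b = (x - X a) + d *\<^sub>R (v' - V b) - (X b - X a - (b - a) *\<^sub>R V b)"
      by (simp add: x'_def bad algebra_simps)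
    have "norm (x' - X b) \<le> norm (x - X a) + norm (d *\<^sub>R (v' - V b)) + norm (X b - X a - (b - a) *\<^sub>R V b)"
      unfolding eq by (meson norm_triangle_ineq norm_triangle_ineq4 add_mono order_trans order_refl)
    also have "\<dots> \<le> ex + \<bar>d\<bar> * norm (v' - V b) + \<bar>d\<bar> * \<epsilon>"
      using LX by (intro add_mono) (auto simp: ex_def bad)
    finally show ?thesis .
  qed
  have "norm (x' - X b) + norm (v' - V b) \<le> (1 + C * \<bar>d\<bar>) * (ex + ev) + C * \<bar>d\<bar> * \<epsilon>"
    using arith_step[OF ex0 ev0 abs_ge_zero d1 L ep norm_ge_zero evb exb] by (simp add: C_def)
  also have "\<dots> \<le> q * (\<epsilon> * (q ^ k - 1)) + C * \<bar>d\<bar> * \<epsilon>"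
    using IH q1 by (simp add: q_def[symmetric] mult_left_mono)
  also have "\<dots> = \<epsilon> * (q ^ Suc k - 1)" by (simp add: q_def algebra_simps)
  finally show ?case using step by (simp add: b_def q_def C_def)
qed


lemma eul_conv:
  assumes sf: "smooth_field E"
  shows "(\<lambda>N. eul E s ((t - s) / real (Suc N)) (Suc N) z) \<longlonglongrightarrow> exact_flow E s t z"
proof -
  define y where "y = sol E s z"
  have c: "is_characteristic E s z y" using sol_char[OF sf] by (simp add: y_def)
  define X where "X = (\<lambda>r. fst (y r))"
  define V where "V = (\<lambda>r. snd (y r))"
  have dy: "\<And>r. (y has_vector_derivative (V r, - E r (X r))) (at r)"
    using c by (simp add: is_characteristic_def X_def V_def)
  have dX: "\<And>r. (X has_vector_derivative V r) (at r)"
    using bounded_linear.has_vector_derivative[OF bounded_linear_fst dy] by (simp add: X_def)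
  have dV: "\<And>r. (V has_vector_derivative - E r (X r)) (at r)"
    using bounded_linear.has_vector_derivative[OF bounded_linear_snd dy] by (simp add: V_def)
  have z: "z = (X s, V s)" using c by (simp add: is_characteristic_def X_def V_def)
  have lim: "exact_flow E s t z = (X t, V t)" by (simp add: exact_flow_sol y_def X_def V_def)
  have cX: "continuous_on UNIV X"
    using dX has_vector_derivative_continuous continuous_at_imp_continuous_on by blast
  have cV: "continuous_on UNIV V"
    using dV has_vector_derivative_continuous continuous_at_imp_continuous_on by blast
  obtain E' where dE: "\<And>t x. (E t has_derivative blinfun_apply (E' t x)) (at x)"
    and cE': "continuous_on UNIV (\<lambda>p. E' (fst p) (snd p))"
    using sf unfolding smooth_field_def by blast
  have cE: "continuous_on UNIV (\<lambda>p. E (fst p) (snd p))" using sf unfolding smooth_field_def by blast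
  let ?I = "{min s t..max s t}"
  have cI: "compact ?I" by simp
  obtain R where R: "\<And>r. r \<in> ?I \<Longrightarrow> norm (X r) \<le> R"
  proof -
    have "bounded (X ` ?I)"
      by (rule compact_imp_bounded[OF compact_continuous_image[OF continuous_on_subset[OF cX] cI]]) auto
    then obtain R where "\<forall>w\<in>X ` ?I. norm w \<le> R" by (auto simp: bounded_iff)
    then show ?thesis using that by blast
  qed
  define B where "B = cball (0::'a) (R + 1)"
  obtain L0 where L0: "\<And>p. p \<in> ?I \<times> B \<Longrightarrow> norm (E' (fst p) (snd p)) \<le> L0"
  proof -
    have "bounded ((\<lambda>p. E' (fst p) (snd p)) ` (?I \<times> B))"
      unfolding B_def by (rule compact_imp_bounded[OF compact_continuous_image[OF continuous_on_subset[OF cE']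
            compact_Times[OF cI compact_cball]]]) auto
    then obtain L0 where "\<forall>w\<in>(\<lambda>p. E' (fst p) (snd p)) ` (?I \<times> B). norm w \<le> L0" by (auto simp: bounded_iff)
    then show ?thesis using that by blast
  qed
  define L where "L = max L0 0"
  have L: "0 \<le> L" by (simp add: L_def)
  have lip: "norm (E r a - E r b) \<le> L * norm (a - b)"
    if r: "r \<in> ?I" and a: "norm a \<le> R + 1" and b: "norm b \<le> R + 1" for r a b
  proof (rule differentiable_bound[where S=B and f'="\<lambda>x. blinfun_apply (E' r x)"])
    show "convex B" by (simp add: B_def)
  next
    fix x assume "x \<in> B"
    show "(E r has_derivative blinfun_apply (E' r x)) (at x within B)"
      using dE has_derivative_at_withinI by blast
  next
    fix x assume x: "x \<in> B"
    have "norm (E' r x) \<le> L0" using L0[of "(r, x)"] r x by simp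
    then show "onorm (blinfun_apply (E' r x)) \<le> L" by (simp add: norm_blinfun.rep_eq[symmetric] L_def)
  next
    show "a \<in> B" "b \<in> B" using a b by (simp_all add: B_def)
  qed
  define W where "W = (\<lambda>r. E r (X r))"
  have cW: "continuous_on UNIV W"
  proof -
    have "continuous_on UNIV (\<lambda>r. (\<lambda>p. E (fst p) (snd p)) ((\<lambda>r. (r, X r)) r))"
      by (rule continuous_on_compose2[OF cE continuous_on_Pair[OF continuous_on_id cX]]) auto
    then show ?thesis by (simp add: W_def)
  qed
  have ucV: "uniformly_continuous_on ?I V"
    by (rule compact_uniformly_continuous[OF continuous_on_subset[OF cV] cI]) auto
  have ucW: "uniformly_continuous_on ?I W"
    by (rule compact_uniformly_continuous[OF continuous_on_subset[OF cW] cI]) auto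
  define C where "C = 3 + 2 * L"
  have C0: "0 \<le> C" using L by (simp add: C_def)
  show ?thesis
  proof (rule LIMSEQ_I)
    fix r :: real assume r: "0 < r"
    define M where "M = exp (C * \<bar>t - s\<bar>)"
    have M0: "0 < M" by (simp add: M_def)
    define \<epsilon> where "\<epsilon> = min 1 (r / 2) / M"
    have ep: "0 < \<epsilon>" using r M0 by (simp add: \<epsilon>_def)
    have epM: "\<epsilon> * M = min 1 (r / 2)" using M0 by (simp add: \<epsilon>_def)
    obtain \<eta>1 where \<eta>1: "\<eta>1 > 0" "\<And>a b. a \<in> ?I \<Longrightarrow> b \<in> ?I \<Longrightarrow> dist b a < \<eta>1 \<Longrightarrow> dist (V b) (V a) < \<epsilon>"
      using ucV ep unfolding uniformly_continuous_on_def by metis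
    obtain \<eta>2 where \<eta>2: "\<eta>2 > 0" "\<And>a b. a \<in> ?I \<Longrightarrow> b \<in> ?I \<Longrightarrow> dist b a < \<eta>2 \<Longrightarrow> dist (W b) (W a) < \<epsilon>"
      using ucW ep unfolding uniformly_continuous_on_def by metis
    define \<eta> where "\<eta> = min (min \<eta>1 \<eta>2) 1"
    have \<eta>0: "0 < \<eta>" using \<eta>1 \<eta>2 by (simp add: \<eta>_def)
    obtain n0 :: nat where n0: "\<bar>t - s\<bar> < real n0 * \<eta>" using ex_less_of_nat_mult[OF \<eta>0] by blast
    show "\<exists>no. \<forall>n\<ge>no. norm (eul E s ((t - s) / real (Suc n)) (Suc n) z - exact_flow E s t z) < r"
    proof (intro exI allI impI)
      fix N assume N: "n0 \<le> N"
      define d where "d = (t - s) / real (Suc N)"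
      have "real n0 * \<eta> \<le> real (Suc N) * \<eta>" using N \<eta>0 by (intro mult_right_mono) auto
      then have tsN: "\<bar>t - s\<bar> < real (Suc N) * \<eta>" using n0 by linarith
      have dabs: "\<bar>d\<bar> = \<bar>t - s\<bar> / real (Suc N)" by (simp add: d_def abs_divide)
      have dlt: "\<bar>d\<bar> < \<eta>" unfolding dabs using tsN by (simp add: divide_less_eq mult.commute)
      have d1: "\<bar>d\<bar> \<le> 1" using dlt by (simp add: \<eta>_def)
      have ucV': "norm (V a - V b) \<le> \<epsilon>"
        if "a \<in> ?I" "b \<in> ?I" "\<bar>a - b\<bar> \<le> \<bar>d\<bar>" for a b
      proof -
        have "dist a b < \<eta>1" using that dlt by (simp add: dist_real_def \<eta>_def)
        then have "dist (V a) (V b) < \<epsilon>" using \<eta>1(2)[of b a] that by blast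
        then show ?thesis by (simp add: dist_norm)
      qed
      have ucW': "norm (E a (X a) - E b (X b)) \<le> \<epsilon>"
        if "a \<in> ?I" "b \<in> ?I" "\<bar>a - b\<bar> \<le> \<bar>d\<bar>" for a b
      proof -
        have "dist a b < \<eta>2" using that dlt by (simp add: dist_real_def \<eta>_def)
        then have "dist (W a) (W b) < \<epsilon>" using \<eta>2(2)[of b a] that by blast
        then show ?thesis by (simp add: dist_norm W_def)
      qed
      have small: "\<epsilon> * exp ((3 + 2 * L) * \<bar>t - s\<bar>) \<le> 1"
        using epM by (simp add: M_def C_def)
      have err: "norm (fst (eul E s d (Suc N) (X s, V s)) - X (s + real (Suc N) * d))
            + norm (snd (eul E s d (Suc N) (X s, V s)) - V (s + real (Suc N) * d))
          \<le> \<epsilon> * ((1 + (3 + 2 * L) * \<bar>d\<bar>) ^ (Suc N) - 1)"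
        by (rule eul_err[OF dX dV R lip L less_imp_le[OF ep] d_def d1 ucV' ucW' small]) auto
      have tN: "s + real (Suc N) * d = t" by (simp add: d_def)
      define q where "q = 1 + C * \<bar>d\<bar>"
      have q1: "1 \<le> q" using C0 by (simp add: q_def)
      have "q ^ Suc N \<le> exp (C * \<bar>d\<bar>) ^ Suc N"
        using power_mono[OF exp_ge_add_one_self[of "C * \<bar>d\<bar>"], of "Suc N"] q1 by (simp add: q_def add.commute)
      also have "\<dots> = exp (real (Suc N) * (C * \<bar>d\<bar>))" by (simp only: exp_of_nat_mult)
      also have "real (Suc N) * (C * \<bar>d\<bar>) = C * \<bar>t - s\<bar>" by (simp add: dabs)
      finally have qN: "q ^ Suc N \<le> M" by (simp add: M_def)
      have "norm (eul E s d (Suc N) z - exact_flow E s t z)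
          \<le> norm (fst (eul E s d (Suc N) z) - X t) + norm (snd (eul E s d (Suc N) z) - V t)"
      proof -
        have pe: "\<And>p::'a \<times> 'a. p - (X t, V t) = (fst p - X t, snd p - V t)" by (simp add: prod_eq_iff)
        show ?thesis unfolding lim pe by (rule norm_Pair_le)
      qed
      also have "\<dots> \<le> \<epsilon> * (q ^ Suc N - 1)" using err tN z by (simp add: q_def C_def)
      also have "\<dots> \<le> \<epsilon> * M" using qN ep by (intro mult_left_mono) auto
      also have "\<dots> < r" using epM r by simp
      finally show "norm (eul E s ((t - s) / real (Suc N)) (Suc N) z - exact_flow E s t z) < r"
        by (simp add: d_def)
    qed
  qed
qed


lemma limit_le:
  fixes Tn :: "nat \<Rightarrow> 'b::euclidean_space \<Rightarrow> 'b"
  assumes mp: "\<And>n. mpres (Tn n)" and lim: "\<And>z. (\<lambda>n. Tn n z) \<longlonglongrightarrow> Phi z"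
  shows "Phi \<in> measurable lborel lborel"
    and "\<And>A::'b set. A \<in> sets lborel \<Longrightarrow> emeasure lborel (Phi -` A) \<le> emeasure lborel A"
proof -
  have mTn: "\<And>n. Tn n \<in> borel_measurable lborel" using mp by (simp add: mpres_def)
  have "Phi \<in> borel_measurable lborel"
    by (rule borel_measurable_LIMSEQ_metric[OF mTn lim])
  then show mPhi: "Phi \<in> measurable lborel lborel" by simp
  have opn: "emeasure lborel (Phi -` U) \<le> emeasure lborel U" if U: "open U" for U
  proof -
    have Us: "U \<in> sets lborel" using U by simp
    have PUs: "Phi -` U \<in> sets lborel" using measurable_sets[OF mPhi Us] by simp
    have TUs: "\<And>n. Tn n -` U \<in> sets lborel" using measurable_sets[OF mpres_meas[OF mp] Us] by simp
    have "emeasure lborel (Phi -` U) = (\<integral>\<^sup>+z. indicator (Phi -` U) z \<partial>lborel)"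
      using PUs by simp
    also have "\<dots> \<le> (\<integral>\<^sup>+z. liminf (\<lambda>n. indicator (Tn n -` U) z) \<partial>lborel)"
    proof (rule nn_integral_mono)
      fix z
      show "indicator (Phi -` U) z \<le> liminf (\<lambda>n. indicator (Tn n -` U) z :: ennreal)"
      proof (cases "Phi z \<in> U")
        case True
        then have "eventually (\<lambda>n. Tn n z \<in> U) sequentially"
          using topological_tendstoD[OF lim U] by blast
        then have "eventually (\<lambda>n. 1 \<le> (indicator (Tn n -` U) z :: ennreal)) sequentially"
          by (rule eventually_mono) simp
        then have "1 \<le> liminf (\<lambda>n. indicator (Tn n -` U) z :: ennreal)"
          by (rule Liminf_bounded)
        then show ?thesis using True by simp
      next
        case False
        then show ?thesis by simp
      qed
    qed
    also have "\<dots> \<le> liminf (\<lambda>n. \<integral>\<^sup>+z. indicator (Tn n -` U) z \<partial>lborel)"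
      by (rule nn_integral_liminf) (use TUs in simp)
    also have "\<dots> = liminf (\<lambda>n. emeasure lborel U)"
      using TUs mpres_emeasure[OF mp Us] by simp
    also have "\<dots> = emeasure lborel U" by (simp add: Liminf_const)
    finally show ?thesis .
  qed
  fix A :: "'b set" assume A: "A \<in> sets lborel"
  show "emeasure lborel (Phi -` A) \<le> emeasure lborel A"
  proof (rule ennreal_le_epsilon)
    fix e :: real assume "0 < e"
    obtain U where U: "open U" "A \<subseteq> U" "emeasure lborel (U - A) < e"
      using outer_regular_lborel[of A e] A \<open>0 < e\<close> by auto
    have "emeasure lborel (Phi -` A) \<le> emeasure lborel (Phi -` U)"
      using U measurable_sets[OF mPhi, of U] by (intro emeasure_mono) auto
    also have "\<dots> \<le> emeasure lborel U" by (rule opn[OF U(1)])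
    also have "\<dots> = emeasure lborel (A \<union> (U - A))"
      using U(2) by (intro arg_cong[where f="emeasure lborel"]) auto
    also have "\<dots> \<le> emeasure lborel A + emeasure lborel (U - A)"
      using A U by (intro emeasure_subadditive) auto
    also have "\<dots> \<le> emeasure lborel A + ennreal e"
      using U by (intro add_left_mono) simp
    finally show "emeasure lborel (Phi -` A) \<le> emeasure lborel A + ennreal e" .
  qed
qed

lemma exact_flow_mpres:
  assumes sf: "smooth_field E" shows "mpres (exact_flow E s t)"
proof -
  have l1: "Phi \<in> measurable lborel lborel \<and> (\<forall>A\<in>sets lborel. emeasure lborel (Phi -` A) \<le> emeasure lborel A)"
    if "Phi = exact_flow E a b" for a b Phi
  proof -
    have h1: "\<And>n. mpres (eul E a ((b - a) / real (Suc n)) (Suc n))" using eul_mpres[OF sf] by blast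
    have h2: "\<And>z. (\<lambda>n. eul E a ((b - a) / real (Suc n)) (Suc n) z) \<longlonglongrightarrow> Phi z"
      using eul_conv[OF sf] that by blast
    show ?thesis using limit_le(1)[OF h1 h2] limit_le(2)[OF h1 h2] by blast
  qed
  let ?P = "exact_flow E s t" and ?Q = "exact_flow E t s"
  have mP: "?P \<in> measurable lborel lborel" using l1 by blast
  have eq: "emeasure lborel (?P -` A) = emeasure lborel A" if A: "A \<in> sets lborel" for A
  proof (rule antisym)
    show "emeasure lborel (?P -` A) \<le> emeasure lborel A" using l1 A by blast
    have B: "?P -` A \<in> sets lborel" using measurable_sets[OF mP A] by simp
    have inv: "\<And>w. exact_flow E s t (exact_flow E t s w) = w" by (rule exact_flow_inv[OF sf])
    have "?Q -` (?P -` A) = A" by (simp add: vimage_def inv)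
    then show "emeasure lborel A \<le> emeasure lborel (?P -` A)" using l1[of ?Q t s] B by force
  qed
  have "distr lborel lborel ?P = lborel"
  proof (rule measure_eqI)
    fix A assume "A \<in> sets (distr lborel lborel ?P)"
    then have A: "A \<in> sets lborel" by simp
    show "emeasure (distr lborel lborel ?P) A = emeasure lborel A"
      using emeasure_distr[OF mP A] eq[OF A] by simp
  qed simp
  then show ?thesis using mP by (simp add: mpres_def)
qed

theorem theorem2p7:
  fixes f0 :: "'a::euclidean_space \<times> 'a \<Rightarrow> real"
    and \<tau> h :: real
    and F :: "nat \<Rightarrow> 'a \<times> 'a \<Rightarrow> real"
  assumes f0_L1: "integrable lborel f0"
    and f0_Linf: "Lp_norm lborel \<infinity> f0 < \<infinity>"
    and f0_nonneg: "\<forall>z. 0 \<le> f0 z"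
    and tau_pos: "\<tau> > 0"
    and h_nonneg: "h \<ge> 0"
    and F_cases:
      "(\<exists>E. smooth_field E \<and> F = (\<lambda>n z. f0 (exact_flow E (real n * \<tau>) 0 z)))
       \<or> (\<exists>Eh. (\<forall>k. C1_map (Eh k)) \<and> F = (\<lambda>n z. f0 (sv_flow \<tau> Eh n z)))"
  shows "\<forall>n::nat.
           (\<forall>z. 0 \<le> F n z) \<and>
           (AE z in lborel. ereal (F n z) \<le> Lp_norm lborel \<infinity> f0) \<and>
           (\<forall>p::ereal. 1 \<le> p \<longrightarrow> Lp_norm lborel p (F n) = Lp_norm lborel p f0) \<and>
           (\<integral>z. F n z * ln (F n z) \<partial>lborel) = (\<integral>z. f0 z * ln (f0 z) \<partial>lborel) \<and>
           (\<forall>g :: real \<Rightarrow> real.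
              integrable lborel (\<lambda>z. g (F n z)) \<and> integrable lborel (\<lambda>z. g (f0 z)) \<longrightarrow>
              (\<integral>z. g (F n z) \<partial>lborel) = (\<integral>z. g (f0 z) \<partial>lborel))"
proof
  fix n :: nat
  have f0m: "f0 \<in> borel_measurable lborel" using f0_L1 by (rule borel_measurable_integrable)
  obtain T where T: "mpres T" and FT: "F n = (\<lambda>z. f0 (T z))"
  proof -
    { assume "\<exists>E. smooth_field E \<and> F = (\<lambda>n z. f0 (exact_flow E (real n * \<tau>) 0 z))"
      then obtain E where "smooth_field E" "F = (\<lambda>n z. f0 (exact_flow E (real n * \<tau>) 0 z))" by blast
      then have "mpres (exact_flow E (real n * \<tau>) 0) \<and> F n = (\<lambda>z. f0 (exact_flow E (real n * \<tau>) 0 z))"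
        using exact_flow_mpres by blast
      then have "\<exists>T. mpres T \<and> F n = (\<lambda>z. f0 (T z))" by blast }
    moreover
    { assume "\<exists>Eh. (\<forall>k. C1_map (Eh k)) \<and> F = (\<lambda>n z. f0 (sv_flow \<tau> Eh n z))"
      then obtain Eh where "\<forall>k. C1_map (Eh k)" "F = (\<lambda>n z. f0 (sv_flow \<tau> Eh n z))" by blast
      then have "mpres (sv_flow \<tau> Eh n) \<and> F n = (\<lambda>z. f0 (sv_flow \<tau> Eh n z))"
        using sv_flow_mpres by blast
      then have "\<exists>T. mpres T \<and> F n = (\<lambda>z. f0 (T z))" by blast }
    ultimately have "\<exists>T. mpres T \<and> F n = (\<lambda>z. f0 (T z))" using F_cases by blast
    then show ?thesis using that by blast
  qed
  show "(\<forall>z. 0 \<le> F n z) \<and>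
           (AE z in lborel. ereal (F n z) \<le> Lp_norm lborel \<infinity> f0) \<and>
           (\<forall>p::ereal. 1 \<le> p \<longrightarrow> Lp_norm lborel p (F n) = Lp_norm lborel p f0) \<and>
           (\<integral>z. F n z * ln (F n z) \<partial>lborel) = (\<integral>z. f0 z * ln (f0 z) \<partial>lborel) \<and>
           (\<forall>g :: real \<Rightarrow> real.
              integrable lborel (\<lambda>z. g (F n z)) \<and> integrable lborel (\<lambda>z. g (f0 z)) \<longrightarrow>
              (\<integral>z. g (F n z) \<partial>lborel) = (\<integral>z. g (f0 z) \<partial>lborel))"
    unfolding FT by (rule mpres_props[OF T f0m f0_nonneg])
qed

end
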